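(* Let $1\le k\le n$. If $A\in H_n^k$ and $A=\pi U_{n,k}\sigma=\rho U_{n,k}\tau$ with $\pi,\sigma,\rho,\tau\in S_n$, then $\pi\sigma=\rho\tau$; hence $T_{n,k}:H_n^k\to S_n$, $T_{n,k}(\pi U_{n,k}\sigma)=\pi\sigma$, is well defined. Moreover $T_{n,k}$ preserves the action of $S_n\times S_n$, i.e. $$T_{n,k}(\pi A\sigma)=\pi\, T_{n,k}(A)\,\sigma\quad\text{for all }A\in H_n^k,\ \pi,\sigma\in S_n.$$
   Context: Permutations are composed as functions, and $\pi\in S_n$ is identified with the $n\times n$ permutation matrix whose $(i,j)$ entry is $1$ iff $i=\pi(j)$. $U_{n,k}$ is the $n\times n$ $(0,1)$-matrix whose upper left $k\times k$ block is upper triangular with all entries on and above the diagonal equal to $1$, whose upper right $k\times(n-k)$ block has all entries $1$, whose lower left $(n-k)\times k$ block is zero, and whose lower right block is $I_{n-k}$. $H_n^k=\{\pi U_{n,k}\sigma\mid \pi,\sigma\in S_n\}\subseteq GL_n(\mathbb{Z}_2)$. *)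

theory Defs
  imports "Jordan_Normal_Form.Matrix" "HOL-Library.Z2" "HOL-Combinatorics.Permutations"
begin

text \<open>Matrices over Z_2 are n x n matrices of type bit mat; indices are 0..n-1.
  A permutation of {0..n-1} is a function p with p permutes {..<n}.\<close>

definition perm_mat :: "nat \<Rightarrow> (nat \<Rightarrow> nat) \<Rightarrow> bit mat" where
  "perm_mat n p = mat n n (\<lambda>(i, j). if i = p j then 1 else 0)"

definition U_mat :: "nat \<Rightarrow> nat \<Rightarrow> bit mat" where
  "U_mat n k = mat n n (\<lambda>(i, j).
     if i < k \<and> j < k then (if i \<le> j then 1 else 0)
     else if i < k \<and> k \<le> j then 1
     else if k \<le> i \<and> j < k then 0
     else (if i = j then 1 else 0))"

definition H_set :: "nat \<Rightarrow> nat \<Rightarrow> bit mat set" where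
  "H_set n k = {perm_mat n p * U_mat n k * perm_mat n s | p s.
                  p permutes {..<n} \<and> s permutes {..<n}}"

definition T_map :: "nat \<Rightarrow> nat \<Rightarrow> bit mat \<Rightarrow> (nat \<Rightarrow> nat)" where
  "T_map n k A = (THE t. \<exists>p s. p permutes {..<n} \<and> s permutes {..<n} \<and>
                      A = perm_mat n p * U_mat n k * perm_mat n s \<and> t = p \<circ> s)"

end

theory Submission imports Defs begin

lemma inv_lt: "p permutes {..<n} \<Longrightarrow> i < n \<Longrightarrow> inv_into UNIV p i < n"
  using permutes_in_image[OF permutes_inv, of p "{..<n}" i] by simp

lemma perm_lt: "p permutes {..<n} \<Longrightarrow> i < n \<Longrightarrow> p i < n"
  using permutes_in_image[of p "{..<n}" i] by simp

lemma perm_left: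
  assumes p: "p permutes {..<n}" and M: "M \<in> carrier_mat n n"
  shows "perm_mat n p * M = mat n n (\<lambda>(i,j). M $$ (inv_into UNIV p i, j))"
proof (rule eq_matI)
  fix i j assume i: "i < dim_row (mat n n (\<lambda>(i,j). M $$ (inv_into UNIV p i, j)))"
    and j: "j < dim_col (mat n n (\<lambda>(i,j). M $$ (inv_into UNIV p i, j)))"
  then have i: "i < n" and j: "j < n" by auto
  have "(perm_mat n p * M) $$ (i,j) = (\<Sum>l\<in>{0..<n}. (if i = p l then 1 else 0) * M $$ (l,j))"
    using i j M by (simp add: perm_mat_def scalar_prod_def)
  also have "\<dots> = (\<Sum>l\<in>{0..<n}. if l = inv_into UNIV p i then M $$ (l,j) else 0)"
  proof (rule sum.cong)
    fix l
    have "(i = p l) = (l = inv_into UNIV p i)" using permutes_inv_eq[OF p] by metis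
    then show "(if i = p l then 1 else 0) * M $$ (l,j) = (if l = inv_into UNIV p i then M $$ (l,j) else 0)" by simp
  qed simp
  also have "\<dots> = M $$ (inv_into UNIV p i, j)" using inv_lt[OF p i] by (simp add: sum.delta')
  finally show "(perm_mat n p * M) $$ (i,j) = mat n n (\<lambda>(i,j). M $$ (inv_into UNIV p i, j)) $$ (i,j)"
    using i j by simp
qed (use M in \<open>auto simp: perm_mat_def\<close>)

lemma perm_right:
  assumes p: "p permutes {..<n}" and M: "M \<in> carrier_mat n n"
  shows "M * perm_mat n p = mat n n (\<lambda>(i,j). M $$ (i, p j))"
proof (rule eq_matI)
  fix i j assume i: "i < dim_row (mat n n (\<lambda>(i,j). M $$ (i, p j)))"
    and j: "j < dim_col (mat n n (\<lambda>(i,j). M $$ (i, p j)))"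
  then have i: "i < n" and j: "j < n" by auto
  have pj: "p j < n" using permutes_in_image[OF p, of j] j by simp
  have "(M * perm_mat n p) $$ (i,j) = (\<Sum>l\<in>{0..<n}. M $$ (i,l) * (if l = p j then 1 else 0))"
    using i j M by (simp add: perm_mat_def scalar_prod_def)
  also have "\<dots> = (\<Sum>l\<in>{0..<n}. if l = p j then M $$ (i,l) else 0)"
    by (rule sum.cong) auto
  also have "\<dots> = M $$ (i, p j)" using pj by (simp add: sum.delta')
  finally show "(M * perm_mat n p) $$ (i,j) = mat n n (\<lambda>(i,j). M $$ (i, p j)) $$ (i,j)"
    using i j by simp
qed (use M in \<open>auto simp: perm_mat_def\<close>)

lemma perm_mat_carrier[simp]: "perm_mat n p \<in> carrier_mat n n"
  by (simp add: perm_mat_def)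
lemma U_carrier[simp]: "U_mat n k \<in> carrier_mat n n"
  by (simp add: U_mat_def)

lemma perm_mat_mult:
  assumes p: "p permutes {..<n}" and q: "q permutes {..<n}"
  shows "perm_mat n p * perm_mat n q = perm_mat n (p \<circ> q)"
proof -
  have "perm_mat n p * perm_mat n q = mat n n (\<lambda>(i,j). perm_mat n q $$ (inv_into UNIV p i, j))"
    by (rule perm_left[OF p]) simp
  also have "\<dots> = perm_mat n (p \<circ> q)"
    by (rule eq_matI) (auto simp: perm_mat_def inv_lt[OF p] permutes_inv_eq[OF p])
  finally show ?thesis .
qed

definition uu :: "nat \<Rightarrow> nat \<Rightarrow> nat \<Rightarrow> bool" where
  "uu k x y \<longleftrightarrow> (x < k \<and> x \<le> y) \<or> (k \<le> x \<and> x = y)"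

lemma U_entry: "x < n \<Longrightarrow> y < n \<Longrightarrow> U_mat n k $$ (x,y) = (if uu k x y then 1 else 0)"
  by (auto simp: U_mat_def uu_def)

lemma PUS_entry:
  assumes p: "p permutes {..<n}" and s: "s permutes {..<n}" and i: "i < n" and j: "j < n"
  shows "(perm_mat n p * U_mat n k * perm_mat n s) $$ (i,j) = (if uu k (inv_into UNIV p i) (s j) then 1 else 0)"
proof -
  have "perm_mat n p * U_mat n k * perm_mat n s =
     mat n n (\<lambda>(i,j). mat n n (\<lambda>(i,j). U_mat n k $$ (inv_into UNIV p i, j)) $$ (i, s j))"
    by (simp add: perm_left[OF p] perm_right[OF s])
  then show ?thesis using i j inv_lt[OF p i] permutes_in_image[OF s] by (simp add: U_entry)
qed


lemma rowset: "x < n \<Longrightarrow> {y\<in>{..<n}. uu k x y} = (if x < k then {x..<n} else {x})"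
  by (auto simp: uu_def)
lemma colset: "y < n \<Longrightarrow> k \<le> n \<Longrightarrow> {x\<in>{..<n}. uu k x y} = (if y < k then {..y} else insert y {..<k})"
  by (auto simp: uu_def)

lemma rowcard: "x < n \<Longrightarrow> card {y\<in>{..<n}. uu k x y} = (if x < k then n - x else 1)"
  by (subst rowset) auto
lemma colcard: "y < n \<Longrightarrow> k \<le> n \<Longrightarrow> card {x\<in>{..<n}. uu k x y} = (if y < k then y + 1 else k + 1)"
  by (subst colset) auto

lemma core:
  assumes a: "a permutes {..<n}" and b: "b permutes {..<n}" and k: "1 \<le> k" "k \<le> n"
    and U: "\<forall>x<n. \<forall>y<n. uu k x y = uu k (a x) (b y)"
  shows "a = b"
proof -
  have binj: "inj_on b S" for S using b by (meson permutes_inj inj_on_subset subset_UNIV)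
  have ainj: "inj_on a S" for S using a by (meson permutes_inj inj_on_subset subset_UNIV)
  have row: "card {y\<in>{..<n}. uu k (a x) y} = card {y\<in>{..<n}. uu k x y}" if x: "x < n" for x
  proof -
    have "{y\<in>{..<n}. uu k (a x) y} = b ` {y\<in>{..<n}. uu k x y}"
    proof (intro Set.set_eqI iffI)
      fix z assume "z \<in> {y\<in>{..<n}. uu k (a x) y}"
      then have z: "z \<in> {..<n}" "uu k (a x) z" by auto
      have "inv_into UNIV b z < n" using inv_lt[OF b] z by simp
      moreover have "b (inv_into UNIV b z) = z" using b by (simp add: permutes_inverses(1))
      ultimately show "z \<in> b ` {y\<in>{..<n}. uu k x y}" using U x z
        by (metis (mono_tags, lifting) image_eqI mem_Collect_eq lessThan_iff)
    next
      fix z assume "z \<in> b ` {y\<in>{..<n}. uu k x y}"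
      then show "z \<in> {y\<in>{..<n}. uu k (a x) y}" using U x b by (auto simp: perm_lt)
    qed
    then show ?thesis by (simp add: card_image binj)
  qed
  have col: "card {x\<in>{..<n}. uu k x (b y)} = card {x\<in>{..<n}. uu k x y}" if y: "y < n" for y
  proof -
    have "{x\<in>{..<n}. uu k x (b y)} = a ` {x\<in>{..<n}. uu k x y}"
    proof (intro Set.set_eqI iffI)
      fix z assume "z \<in> {x\<in>{..<n}. uu k x (b y)}"
      then have z: "z \<in> {..<n}" "uu k z (b y)" by auto
      have "inv_into UNIV a z < n" using inv_lt[OF a] z by simp
      moreover have "a (inv_into UNIV a z) = z" using a by (simp add: permutes_inverses(1))
      ultimately show "z \<in> a ` {x\<in>{..<n}. uu k x y}" using U y z
        by (metis (mono_tags, lifting) image_eqI mem_Collect_eq lessThan_iff)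
    next
      fix z assume "z \<in> a ` {x\<in>{..<n}. uu k x y}"
      then show "z \<in> {x\<in>{..<n}. uu k x (b y)}" using U y a by (auto simp: perm_lt)
    qed
    then show ?thesis by (simp add: card_image ainj)
  qed
  have afix: "a x = x" if x: "x < k" for x
  proof -
    have xn: "x < n" using x k by simp
    have axn: "a x < n" using a xn by (simp add: perm_lt)
    have "card {y\<in>{..<n}. uu k (a x) y} = n - x" using row[OF xn] rowcard[OF xn] x by simp
    then have "(if a x < k then n - a x else 1) = n - x" using rowcard[OF axn] by simp
    then show ?thesis using x xn axn k by (auto split: if_splits)
  qed
  have bfix: "b y = y" if y: "y < k" for y
  proof -
    have yn: "y < n" using y k by simp
    have byn: "b y < n" using b yn by (simp add: perm_lt)
    have "card {x\<in>{..<n}. uu k x (b y)} = y + 1" using col[OF yn] colcard[OF yn k(2)] y by simp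
    then have "(if b y < k then b y + 1 else k + 1) = y + 1" using colcard[OF byn k(2)] by simp
    then show ?thesis using y by (auto split: if_splits)
  qed
  show ?thesis
  proof
    fix x
    show "a x = b x"
    proof (cases "x < n")
      case False then show ?thesis using a b by (simp add: permutes_def)
    next
      case xn: True
      show ?thesis
      proof (cases "x < k")
        case True then show ?thesis using afix bfix by simp
      next
        case False
        have axk: "\<not> a x < k"
        proof
          assume "a x < k"
          then have "a (a x) = a x" by (rule afix)
          then have "a x = x" using ainj[of UNIV] by (simp add: inj_eq)
          then show False using False \<open>a x < k\<close> by simp
        qed
        have "uu k x x" using False by (simp add: uu_def)
        then have "uu k (a x) (b x)" using U xn by blast
        then show ?thesis using axk by (simp add: uu_def)
      qed
    qed
  qed
qed


lemma part1:
  assumes k: "1 \<le> k" "k \<le> n"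
    and p: "p permutes {..<n}" and s: "s permutes {..<n}"
    and r: "r permutes {..<n}" and t: "t permutes {..<n}"
    and E: "perm_mat n p * U_mat n k * perm_mat n s = perm_mat n r * U_mat n k * perm_mat n t"
  shows "p \<circ> s = r \<circ> t"
proof -
  define a where "a = inv_into UNIV r \<circ> p"
  define b where "b = t \<circ> inv_into UNIV s"
  have a: "a permutes {..<n}" unfolding a_def by (intro permutes_compose p permutes_inv r)
  have b: "b permutes {..<n}" unfolding b_def by (intro permutes_compose t permutes_inv s)
  have U: "\<forall>x<n. \<forall>y<n. uu k x y = uu k (a x) (b y)"
  proof (intro allI impI)
    fix x y assume x: "x < n" and y: "y < n"
    have i: "p x < n" using perm_lt[OF p x] .
    have j: "inv_into UNIV s y < n" using inv_lt[OF s y] .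
    have "(perm_mat n p * U_mat n k * perm_mat n s) $$ (p x, inv_into UNIV s y)
        = (perm_mat n r * U_mat n k * perm_mat n t) $$ (p x, inv_into UNIV s y)" using E by simp
    then have "(if uu k (inv_into UNIV p (p x)) (s (inv_into UNIV s y)) then 1 else 0 :: bit)
        = (if uu k (inv_into UNIV r (p x)) (t (inv_into UNIV s y)) then 1 else 0)"
      using PUS_entry[OF p s i j] PUS_entry[OF r t i j] by simp
    moreover have "inv_into UNIV p (p x) = x" using p by (simp add: permutes_inverses(2))
    moreover have "s (inv_into UNIV s y) = y" using s by (simp add: permutes_inverses(1))
    ultimately show "uu k x y = uu k (a x) (b y)" unfolding a_def b_def
      by (auto split: if_splits)
  qed
  have ab: "a = b" by (rule core[OF a b k U])
  show ?thesis
  proof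
    fix x
    have "inv_into UNIV r (p (s x)) = t (inv_into UNIV s (s x))"
      using ab unfolding a_def b_def by (metis comp_apply)
    then have "inv_into UNIV r (p (s x)) = t x" using s by (simp add: permutes_inverses(2))
    then have "r (inv_into UNIV r (p (s x))) = r (t x)" by simp
    then show "(p \<circ> s) x = (r \<circ> t) x" using r by (simp add: permutes_inverses(1))
  qed
qed

lemma T_eq:
  assumes k: "1 \<le> k" "k \<le> n"
    and p: "p permutes {..<n}" and s: "s permutes {..<n}"
  shows "T_map n k (perm_mat n p * U_mat n k * perm_mat n s) = p \<circ> s"
  unfolding T_map_def
proof (rule the_equality)
  show "\<exists>p' s'. p' permutes {..<n} \<and> s' permutes {..<n} \<and>
      perm_mat n p * U_mat n k * perm_mat n s = perm_mat n p' * U_mat n k * perm_mat n s' \<and> p \<circ> s = p' \<circ> s'"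
    using p s by blast
next
  fix t0 assume "\<exists>p' s'. p' permutes {..<n} \<and> s' permutes {..<n} \<and>
      perm_mat n p * U_mat n k * perm_mat n s = perm_mat n p' * U_mat n k * perm_mat n s' \<and> t0 = p' \<circ> s'"
  then obtain p' s' where "p' permutes {..<n}" "s' permutes {..<n}"
     "perm_mat n p * U_mat n k * perm_mat n s = perm_mat n p' * U_mat n k * perm_mat n s'" "t0 = p' \<circ> s'"
    by blast
  then show "t0 = p \<circ> s" using part1[OF k p s] by metis
qed

theorem mainTheorem3:
  fixes n k :: nat
  assumes "1 \<le> k" and "k \<le> n"
  shows "(\<forall>p s r t. p permutes {..<n} \<and> s permutes {..<n} \<and>
              r permutes {..<n} \<and> t permutes {..<n} \<and>
              perm_mat n p * U_mat n k * perm_mat n s = perm_mat n r * U_mat n k * perm_mat n t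
              \<longrightarrow> p \<circ> s = r \<circ> t)
       \<and> (\<forall>A \<in> H_set n k. \<forall>p s. p permutes {..<n} \<and> s permutes {..<n} \<longrightarrow>
              T_map n k (perm_mat n p * A * perm_mat n s) = p \<circ> T_map n k A \<circ> s)"
proof (intro conjI allI impI ballI)
  fix p s r t
  assume "p permutes {..<n} \<and> s permutes {..<n} \<and>
              r permutes {..<n} \<and> t permutes {..<n} \<and>
              perm_mat n p * U_mat n k * perm_mat n s = perm_mat n r * U_mat n k * perm_mat n t"
  then show "p \<circ> s = r \<circ> t" using part1[OF assms] by blast
next
  fix A p s
  assume "A \<in> H_set n k" and ps: "p permutes {..<n} \<and> s permutes {..<n}"
  then obtain p0 s0 where p0: "p0 permutes {..<n}" and s0: "s0 permutes {..<n}"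
    and A: "A = perm_mat n p0 * U_mat n k * perm_mat n s0"
    unfolding H_set_def by blast
  have p: "p permutes {..<n}" and s: "s permutes {..<n}" using ps by auto
  have "perm_mat n p * A * perm_mat n s
      = (perm_mat n p * perm_mat n p0) * U_mat n k * (perm_mat n s0 * perm_mat n s)"
  proof -
    let ?P = "perm_mat n p" and ?Q = "perm_mat n p0" and ?U = "U_mat n k"
      and ?T = "perm_mat n s0" and ?S = "perm_mat n s"
    have c: "?P \<in> carrier_mat n n" "?Q \<in> carrier_mat n n" "?U \<in> carrier_mat n n"
      "?T \<in> carrier_mat n n" "?S \<in> carrier_mat n n" by auto
    have "?P * (?Q * ?U * ?T) = ?P * (?Q * ?U) * ?T"
      using c by (metis assoc_mult_mat mult_carrier_mat)
    then have "?P * (?Q * ?U * ?T) * ?S = (?P * ?Q) * ?U * ?T * ?S"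
      using c by (metis assoc_mult_mat mult_carrier_mat)
    also have "\<dots> = (?P * ?Q) * ?U * (?T * ?S)"
      using c by (metis assoc_mult_mat mult_carrier_mat)
    finally show ?thesis unfolding A .
  qed
  also have "\<dots> = perm_mat n (p \<circ> p0) * U_mat n k * perm_mat n (s0 \<circ> s)"
    by (simp add: perm_mat_mult p p0 s s0)
  finally have "T_map n k (perm_mat n p * A * perm_mat n s) = (p \<circ> p0) \<circ> (s0 \<circ> s)"
    using T_eq[OF assms permutes_compose[OF p0 p] permutes_compose[OF s s0]] by simp
  moreover have "T_map n k A = p0 \<circ> s0" unfolding A by (rule T_eq[OF assms p0 s0])
  ultimately show "T_map n k (perm_mat n p * A * perm_mat n s) = p \<circ> T_map n k A \<circ> s"
    by (simp add: comp_assoc)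
qed

end
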